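(* Let $X$ be a regular Lusin space. Then every quasicontinuous function $f:X\to\mathbb{R}$ is of the first Baire class.
   Context: All spaces are assumed regular. A Hausdorff space $X$ is a Lusin space (in the sense of Kunen) if (a) every nowhere dense subset of $X$ is countable, (b) $X$ has at most countably many isolated points, and (c) $X$ is uncountable. A function $f:X\to Y$ is quasicontinuous if for every $x\in X$, every open $V\ni f(x)$ and every open $U\ni x$ there is a nonempty open $W\subseteq U$ with $f(W)\subseteq V$. A function $f:X\to\mathbb{R}$ is of the first Baire class if it is the pointwise limit of a sequence of continuous real-valued functions on $X$. *)

theory Defs
  imports "HOL-Analysis.Analysis"
begin

definition nowhere_dense_in :: "'a topology \<Rightarrow> 'a set \<Rightarrow> bool" where
  "nowhere_dense_in X S \<longleftrightarrow> S \<subseteq> topspace X \<and> X interior_of (X closure_of S) = {}"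

definition Lusin_space :: "'a topology \<Rightarrow> bool" where
  "Lusin_space X \<longleftrightarrow> Hausdorff_space X
     \<and> (\<forall>S. nowhere_dense_in X S \<longrightarrow> countable S)
     \<and> countable {x \<in> topspace X. openin X {x}}
     \<and> uncountable (topspace X)"

definition quasicontinuous_on :: "'a topology \<Rightarrow> ('a \<Rightarrow> real) \<Rightarrow> bool" where
  "quasicontinuous_on X f \<longleftrightarrow>
     (\<forall>x \<in> topspace X. \<forall>V U. open V \<and> f x \<in> V \<and> openin X U \<and> x \<in> U \<longrightarrow>
        (\<exists>W. openin X W \<and> W \<noteq> {} \<and> W \<subseteq> U \<and> f ` W \<subseteq> V))"

definition first_Baire_class :: "'a topology \<Rightarrow> ('a \<Rightarrow> real) \<Rightarrow> bool" where
  "first_Baire_class X f \<longleftrightarrow>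
     (\<exists>g :: nat \<Rightarrow> 'a \<Rightarrow> real. (\<forall>n. continuous_map X euclideanreal (g n))
        \<and> (\<forall>x \<in> topspace X. (\<lambda>n. g n x) \<longlonglongrightarrow> f x))"

end

theory Submission
  imports Defs
begin

lemma lusin_nd_countable:
  assumes L: "Lusin_space X" and S: "S \<subseteq> topspace X"
    and nd: "\<And>T. openin X T \<Longrightarrow> T \<noteq> {} \<Longrightarrow> T \<subseteq> X closure_of S \<Longrightarrow> False"
  shows "countable S"
proof -
  have "X interior_of (X closure_of S) = {}"
    unfolding interior_of_eq_empty using nd by blast
  then have "nowhere_dense_in X S" using S by (simp add: nowhere_dense_in_def)
  then show ?thesis using L by (simp add: Lusin_space_def)
qed

lemma lusin_ccc:
  assumes L: "Lusin_space X" and pw: "pairwise disjnt M"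
    and op: "\<And>W. W \<in> M \<Longrightarrow> openin X W \<and> W \<noteq> {}"
  shows "countable M"
proof -
  define p where "p W = (SOME x. x \<in> W)" for W :: "'a set"
  have p: "p W \<in> W" if "W \<in> M" for W
    using op[OF that] unfolding p_def by (meson ex_in_conv someI_ex)
  have inj: "inj_on p M"
  proof (rule inj_onI)
    fix W1 W2 assume "W1 \<in> M" "W2 \<in> M" "p W1 = p W2"
    then have "p W1 \<in> W1 \<inter> W2" using p by (metis IntI)
    then show "W1 = W2" using pw \<open>W1 \<in> M\<close> \<open>W2 \<in> M\<close> unfolding pairwise_def disjnt_def by blast
  qed
  have ptop: "p W \<in> topspace X" if "W \<in> M" for W
    using p[OF that] openin_subset[of X W] op[OF that] by blast
  have H: "Hausdorff_space X" using L by (simp add: Lusin_space_def)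
  define M1 where "M1 = {W \<in> M. openin X {p W}}"
  define M2 where "M2 = M - M1"
  have "p ` M1 \<subseteq> {x \<in> topspace X. openin X {x}}"
    using ptop unfolding M1_def by auto
  moreover have "countable {x \<in> topspace X. openin X {x}}" using L by (simp add: Lusin_space_def)
  ultimately have "countable (p ` M1)" by (rule countable_subset)
  moreover have "inj_on p M1" using inj unfolding M1_def by (rule inj_on_subset) blast
  ultimately have c1: "countable M1" by (rule countable_image_inj_on)
  have "countable (p ` M2)"
  proof (rule lusin_nd_countable[OF L])
    show "p ` M2 \<subseteq> topspace X" using ptop unfolding M2_def by auto
  next
    fix T assume T: "openin X T" "T \<noteq> {}" "T \<subseteq> X closure_of (p ` M2)"
    then obtain t where "t \<in> T" by blast
    then have "t \<in> X closure_of (p ` M2)" using T by blast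
    then obtain y where "y \<in> p ` M2" "y \<in> T" using T(1) \<open>t \<in> T\<close> unfolding in_closure_of by blast
    then obtain W where W: "W \<in> M2" "p W \<in> T" by blast
    have WM: "W \<in> M" "\<not> openin X {p W}" using W unfolding M2_def M1_def by auto
    have G: "T \<inter> W = {p W}"
    proof
      show "{p W} \<subseteq> T \<inter> W" using W(2) p[OF WM(1)] by blast
      show "T \<inter> W \<subseteq> {p W}"
      proof
        fix z assume z: "z \<in> T \<inter> W"
        show "z \<in> {p W}"
        proof (rule ccontr)
          assume zn: "z \<notin> {p W}"
          have pt: "p W \<in> topspace X" using ptop WM by blast
          have "openin X (topspace X - {p W})"
            using closedin_Hausdorff_singleton[OF H pt] unfolding closedin_def by blast
          then have oT: "openin X (T \<inter> W \<inter> (topspace X - {p W}))"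
            using T(1) op[OF WM(1)] by (intro openin_Int) auto
          have zc: "z \<in> X closure_of (p ` M2)" using z T by blast
          have zt: "z \<in> topspace X" using zc by (simp add: in_closure_of)
          have zT: "z \<in> T \<inter> W \<inter> (topspace X - {p W})"
            using z zn zt by blast
          have "\<exists>y. y \<in> p ` M2 \<and> y \<in> T \<inter> W \<inter> (topspace X - {p W})"
            by (rule in_closure_of[THEN iffD1, OF zc, THEN conjunct2, rule_format], rule conjI[OF zT oT])
          then obtain y where y: "y \<in> p ` M2" "y \<in> T \<inter> W \<inter> (topspace X - {p W})"
            by blast
          then obtain W' where W': "W' \<in> M2" "y = p W'" by blast
          then have "W' \<in> M2" "p W' \<in> W" "p W' \<noteq> p W" using y by auto
          moreover have W'M: "W' \<in> M" using \<open>W' \<in> M2\<close> M2_def by blast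
          ultimately have "p W' \<in> W' \<inter> W" "W' \<noteq> W" using p[OF W'M] by auto
          then show False using pw WM \<open>W' \<in> M\<close> unfolding pairwise_def disjnt_def by blast
        qed
      qed
    qed
    have "openin X (T \<inter> W)" using T(1) op[OF WM(1)] by (intro openin_Int) auto
    then show False using G WM by simp
  qed
  moreover have "inj_on p M2" using inj unfolding M2_def by (rule inj_on_subset) blast
  ultimately have c2: "countable M2" by (rule countable_image_inj_on)
  have "M = M1 \<union> M2" unfolding M2_def M1_def by blast
  then show ?thesis using c1 c2 by simp
qed

lemma lusin_lindelof_open:
  assumes L: "Lusin_space X" and G: "openin X G"
    and U: "\<And>U. U \<in> \<U> \<Longrightarrow> openin X U" and UO: "\<Union>\<U> = G"
  shows "\<exists>\<V>. countable \<V> \<and> \<V> \<subseteq> \<U> \<and> \<Union>\<V> = G"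
proof -
  define \<W> where "\<W> = {W. openin X W \<and> W \<noteq> {} \<and> (\<exists>U\<in>\<U>. W \<subseteq> U)}"
  define \<A> where "\<A> = {M. M \<subseteq> \<W> \<and> pairwise disjnt M}"
  have "\<forall>C\<in>chains \<A>. \<Union>C \<in> \<A>"
  proof
    fix C assume C: "C \<in> chains \<A>"
    then have C1: "\<And>S. S \<in> C \<Longrightarrow> pairwise disjnt S" and C2: "chain\<^sub>\<subseteq> C" and "C \<subseteq> \<A>"
      unfolding chains_def \<A>_def by auto
    have "pairwise disjnt (\<Union>C)" using C1 C2 by (rule pairwise_chain_Union)
    moreover have "\<Union>C \<subseteq> \<W>" using \<open>C \<subseteq> \<A>\<close> unfolding \<A>_def by auto
    ultimately show "\<Union>C \<in> \<A>" unfolding \<A>_def by simp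
  qed
  then obtain M where M: "M \<in> \<A>" and Mmax: "\<And>N. N \<in> \<A> \<Longrightarrow> M \<subseteq> N \<Longrightarrow> N = M"
    using Zorn_Lemma[of \<A>] by blast
  have MW: "M \<subseteq> \<W>" and Mpw: "pairwise disjnt M" using M unfolding \<A>_def by auto
  have cM: "countable M"
  proof (rule lusin_ccc[OF L Mpw])
    fix W assume "W \<in> M" then show "openin X W \<and> W \<noteq> {}" using MW unfolding \<W>_def by auto
  qed
  have "\<forall>W\<in>M. \<exists>U. U \<in> \<U> \<and> W \<subseteq> U" using MW unfolding \<W>_def by auto
  then obtain u where u: "\<And>W. W \<in> M \<Longrightarrow> u W \<in> \<U> \<and> W \<subseteq> u W" by metis
  define R where "R = G - \<Union>(u ` M)"
  have Rtop: "R \<subseteq> topspace X" using openin_subset[OF G] unfolding R_def by blast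
  have cR: "countable R"
  proof (rule lusin_nd_countable[OF L Rtop])
    fix T assume T: "openin X T" "T \<noteq> {}" "T \<subseteq> X closure_of R"
    have "T \<inter> X closure_of R \<noteq> {}" using T by blast
    then have "T \<inter> R \<noteq> {}" using openin_Int_closure_of_eq_empty[OF T(1)] by blast
    then obtain r where r: "r \<in> T" "r \<in> R" by blast
    then have "r \<in> G" unfolding R_def by blast
    then obtain U0 where U0: "U0 \<in> \<U>" "r \<in> U0" using UO by blast
    define V where "V = T \<inter> U0"
    have oV: "openin X V" unfolding V_def using T(1) U[OF U0(1)] by (rule openin_Int)
    have VW: "V \<in> \<W>" unfolding \<W>_def V_def using oV[unfolded V_def] r U0 by blast
    have "\<exists>W\<in>M. V \<inter> W \<noteq> {}"
    proof (rule ccontr)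
      assume "\<not> (\<exists>W\<in>M. V \<inter> W \<noteq> {})"
      then have dis: "\<forall>W\<in>M. V \<inter> W = {}" by blast
      have "pairwise disjnt (insert V M)"
        using Mpw dis unfolding pairwise_insert disjnt_def by (simp add: Int_commute)
      then have "insert V M \<in> \<A>" using MW VW unfolding \<A>_def by blast
      then have "insert V M = M" using Mmax by blast
      then have "V \<in> M" by blast
      then have "V = {}" using dis by blast
      then show False using r U0 unfolding V_def by blast
    qed
    then obtain W where W: "W \<in> M" "V \<inter> W \<noteq> {}" by blast
    have oW: "openin X W" using W(1) MW unfolding \<W>_def by blast
    have oVW: "openin X (V \<inter> W)" using oV oW by (rule openin_Int)
    have "(V \<inter> W) \<inter> X closure_of R = V \<inter> W" using T(3) unfolding V_def by blast
    then have "(V \<inter> W) \<inter> R \<noteq> {}"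
      using openin_Int_closure_of_eq_empty[OF oVW] W(2) by blast
    moreover have "W \<subseteq> u W" using u[OF W(1)] by blast
    ultimately show False unfolding R_def using W(1) by blast
  qed
  have "\<forall>r\<in>R. \<exists>U. U \<in> \<U> \<and> r \<in> U" using UO unfolding R_def by blast
  then obtain v where v: "\<And>r. r \<in> R \<Longrightarrow> v r \<in> \<U> \<and> r \<in> v r" by metis
  define \<V> where "\<V> = u ` M \<union> v ` R"
  have "countable \<V>" unfolding \<V>_def using cM cR by simp
  moreover have "\<V> \<subseteq> \<U>" unfolding \<V>_def using u v by blast
  moreover have "\<Union>\<V> = G"
  proof
    show "\<Union>\<V> \<subseteq> G" using \<open>\<V> \<subseteq> \<U>\<close> UO by blast
    show "G \<subseteq> \<Union>\<V>"
    proof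
      fix x assume "x \<in> G"
      show "x \<in> \<Union>\<V>"
      proof (cases "x \<in> R")
        case True then show ?thesis using v[OF True] unfolding \<V>_def by blast
      next
        case False then show ?thesis using \<open>x \<in> G\<close> unfolding R_def \<V>_def by blast
      qed
    qed
  qed
  ultimately show ?thesis by blast
qed

lemma lusin_Lindelof:
  assumes L: "Lusin_space X" shows "Lindelof_space X"
  unfolding Lindelof_space_def
proof (intro allI impI)
  fix \<U> assume H: "(\<forall>U\<in>\<U>. openin X U) \<and> \<Union>\<U> = topspace X"
  show "\<exists>\<V>. countable \<V> \<and> \<V> \<subseteq> \<U> \<and> \<Union>\<V> = topspace X"
    by (rule lusin_lindelof_open[OF L openin_topspace]) (use H in auto)
qed

lemma lusin_normal: "regular_space X \<Longrightarrow> Lusin_space X \<Longrightarrow> normal_space X"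
  using lusin_Lindelof regular_Lindelof_imp_normal_space by blast

lemma lusin_open_fsigma:
  assumes R: "regular_space X" and L: "Lusin_space X" and G: "openin X G"
  shows "fsigma_in X G"
proof -
  define \<U> where "\<U> = {U. openin X U \<and> X closure_of U \<subseteq> G}"
  have "\<Union>\<U> = G"
  proof
    show "\<Union>\<U> \<subseteq> G"
    proof
      fix x assume "x \<in> \<Union>\<U>"
      then obtain U where "U \<in> \<U>" "x \<in> U" by blast
      then have "openin X U" "X closure_of U \<subseteq> G" unfolding \<U>_def by auto
      moreover have "U \<subseteq> X closure_of U" using closure_of_subset openin_subset \<open>openin X U\<close> by metis
      ultimately show "x \<in> G" using \<open>x \<in> U\<close> by blast
    qed
    show "G \<subseteq> \<Union>\<U>"
    proof
      fix x assume x: "x \<in> G"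
      have "neighbourhood_base_of (closedin X) X" using R neighbourhood_base_of_closedin by blast
      then obtain U V where UV: "openin X U" "closedin X V" "x \<in> U" "U \<subseteq> V" "V \<subseteq> G"
        using G x unfolding neighbourhood_base_of by metis
      then have "X closure_of U \<subseteq> V" by (simp add: closure_of_minimal)
      then have "U \<in> \<U>" unfolding \<U>_def using UV by blast
      then show "x \<in> \<Union>\<U>" using UV by blast
    qed
  qed
  then obtain \<V> where V: "countable \<V>" "\<V> \<subseteq> \<U>" "\<Union>\<V> = G"
    using lusin_lindelof_open[OF L G, of \<U>] unfolding \<U>_def by blast
  have "G = \<Union>((\<lambda>U. X closure_of U) ` \<V>)"
  proof
    show "G \<subseteq> \<Union>((\<lambda>U. X closure_of U) ` \<V>)"
    proof
      fix x assume "x \<in> G"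
      then obtain U where "U \<in> \<V>" "x \<in> U" using V by blast
      moreover have "U \<subseteq> topspace X" using \<open>U \<in> \<V>\<close> V(2) openin_subset unfolding \<U>_def by blast
      ultimately show "x \<in> \<Union>((\<lambda>U. X closure_of U) ` \<V>)" using closure_of_subset by blast
    qed
    show "\<Union>((\<lambda>U. X closure_of U) ` \<V>) \<subseteq> G" using V(2) unfolding \<U>_def by blast
  qed
  moreover have "fsigma_in X (\<Union>((\<lambda>U. X closure_of U) ` \<V>))"
    by (rule fsigma_in_Union) (use V(1) in \<open>auto intro: closed_imp_fsigma_in\<close>)
  ultimately show ?thesis by simp
qed

definition contpt :: "'a topology \<Rightarrow> ('a \<Rightarrow> real) \<Rightarrow> 'a \<Rightarrow> bool" where
  "contpt X f x \<longleftrightarrow> (\<forall>e>0. \<exists>U. openin X U \<and> x \<in> U \<and> (\<forall>y\<in>U. \<bar>f y - f x\<bar> < e))"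

lemma quasi_disc_countable:
  assumes L: "Lusin_space X" and q: "quasicontinuous_on X f"
  shows "countable {x \<in> topspace X. \<not> contpt X f x}"
proof -
  define B where "B n = {x \<in> topspace X. \<forall>U. openin X U \<and> x \<in> U \<longrightarrow>
                     (\<exists>y\<in>U. \<bar>f y - f x\<bar> \<ge> 1 / real (Suc n))}" for n
  have sub: "{x \<in> topspace X. \<not> contpt X f x} \<subseteq> (\<Union>n. B n)"
  proof
    fix x assume x: "x \<in> {x \<in> topspace X. \<not> contpt X f x}"
    then obtain e where e: "e > 0" "\<And>U. openin X U \<Longrightarrow> x \<in> U \<Longrightarrow> \<exists>y\<in>U. \<bar>f y - f x\<bar> \<ge> e"
      unfolding contpt_def by (auto simp: not_less)
    obtain n where n: "1 / real (Suc n) < e" using e(1) by (rule nat_approx_posE)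
    have "x \<in> B n" unfolding B_def
    proof (intro CollectI conjI allI impI)
      show "x \<in> topspace X" using x by blast
      fix U assume "openin X U \<and> x \<in> U"
      then obtain y where "y \<in> U" "\<bar>f y - f x\<bar> \<ge> e" using e(2) by blast
      then show "\<exists>y\<in>U. \<bar>f y - f x\<bar> \<ge> 1 / real (Suc n)" using n by force
    qed
    then show "x \<in> (\<Union>n. B n)" by blast
  qed
  have cB: "countable (B n)" for n
  proof (rule lusin_nd_countable[OF L])
    show "B n \<subseteq> topspace X" unfolding B_def by blast
  next
    fix T assume T: "openin X T" "T \<noteq> {}" "T \<subseteq> X closure_of (B n)"
    then obtain x0 where x0: "x0 \<in> T" by blast
    have x0t: "x0 \<in> topspace X" using x0 T(1) openin_subset by blast
    define d where "d = 1 / (3 * real (Suc n))"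
    have d: "d > 0" unfolding d_def by simp
    have "\<exists>W. openin X W \<and> W \<noteq> {} \<and> W \<subseteq> T \<and> f ` W \<subseteq> ball (f x0) d"
      using q x0t T(1) x0 d unfolding quasicontinuous_on_def by (meson centre_in_ball open_ball)
    then obtain W where W: "openin X W" "W \<noteq> {}" "W \<subseteq> T" "f ` W \<subseteq> ball (f x0) d" by blast
    have "W \<inter> X closure_of (B n) = W" using W(3) T(3) by blast
    then have "W \<inter> B n \<noteq> {}" using openin_Int_closure_of_eq_empty[OF W(1)] W(2) by blast
    then obtain x where x: "x \<in> W" "x \<in> B n" by blast
    then obtain y where y: "y \<in> W" "\<bar>f y - f x\<bar> \<ge> 1 / real (Suc n)"
      using W(1) unfolding B_def by blast
    have "\<bar>f x - f x0\<bar> < d" "\<bar>f y - f x0\<bar> < d"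
      using W(4) x(1) y(1) by (auto simp: dist_real_def abs_minus_commute)
    moreover have "1 / real (Suc n) = 3 * d" unfolding d_def by (simp add: divide_simps)
    ultimately show False using y(2) by linarith
  qed
  show ?thesis
    by (rule countable_subset[OF sub]) (use cB in auto)
qed

lemma fsigma_preimage:
  assumes H: "Hausdorff_space X" and perf: "\<And>G. openin X G \<Longrightarrow> fsigma_in X G"
    and cD: "countable D" and nc: "\<And>x. x \<in> topspace X \<Longrightarrow> x \<notin> D \<Longrightarrow> contpt X h x"
    and V: "open V"
  shows "fsigma_in X {x \<in> topspace X. h x \<in> V}"
proof -
  define S where "S = {x \<in> topspace X. h x \<in> V}"
  have "S \<subseteq> X interior_of S \<union> (D \<inter> S)"
  proof
    fix x assume xS: "x \<in> S"
    show "x \<in> X interior_of S \<union> (D \<inter> S)"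
    proof (cases "x \<in> D")
      case True then show ?thesis using xS by blast
    next
      case False
      have xt: "x \<in> topspace X" and hx: "h x \<in> V" using xS unfolding S_def by auto
      have "\<exists>e>0. ball (h x) e \<subseteq> V" using open_contains_ball[THEN iffD1, OF V] hx by (rule bspec)
      then obtain e where e: "e > 0" "ball (h x) e \<subseteq> V" by (elim exE conjE)
      obtain U where U: "openin X U" "x \<in> U" "\<forall>y\<in>U. \<bar>h y - h x\<bar> < e"
        using nc[OF xt False, unfolded contpt_def, rule_format, OF e(1)] by (elim exE conjE)
      have "U \<subseteq> S"
      proof
        fix y assume y: "y \<in> U"
        have "y \<in> topspace X" using openin_subset[OF U(1)] y by blast
        moreover have "h y \<in> ball (h x) e" using bspec[OF U(3) y] by (simp add: dist_real_def abs_minus_commute)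
        ultimately show "y \<in> S" using e(2) unfolding S_def by blast
      qed
      then have "U \<subseteq> X interior_of S" using U(1) by (rule interior_of_maximal)
      then show ?thesis using U(2) by blast
    qed
  qed
  then have Seq: "S = X interior_of S \<union> (D \<inter> S)" using interior_of_subset[of X S] by blast
  have f1: "fsigma_in X (X interior_of S)" by (rule perf) simp
  have "D \<inter> S = \<Union>((\<lambda>x. {x}) ` (D \<inter> S))" by blast
  moreover have "fsigma_in X (\<Union>((\<lambda>x. {x}) ` (D \<inter> S)))"
  proof (rule fsigma_in_Union)
    show "countable ((\<lambda>x. {x}) ` (D \<inter> S))" using cD by simp
  next
    fix T assume "T \<in> (\<lambda>x. {x}) ` (D \<inter> S)"
    then obtain x where "x \<in> S" "T = {x}" by blast
    then have "x \<in> topspace X" unfolding S_def by blast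
    then show "fsigma_in X T" using \<open>T = {x}\<close> closedin_Hausdorff_singleton[OF H] closed_imp_fsigma_in by metis
  qed
  ultimately have f2: "fsigma_in X (D \<inter> S)" by simp
  show ?thesis using fsigma_in_Un[OF f1 f2] Seq unfolding S_def[symmetric] by simp
qed

lemma fsigma_closed_diff:
  assumes perf: "\<And>G. openin X G \<Longrightarrow> fsigma_in X G" and K: "closedin X K" and C: "closedin X C"
  shows "fsigma_in X (K - C)"
proof -
  have "K - C = K \<inter> (topspace X - C)" using closedin_subset[OF K] by blast
  moreover have "fsigma_in X (topspace X - C)" using C by (intro perf openin_diff) auto
  ultimately show ?thesis using fsigma_in_Int[OF closed_imp_fsigma_in[OF K]] by simp
qed

lemma separation_ambiguous:
  assumes perf: "\<And>G. openin X G \<Longrightarrow> fsigma_in X G"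
    and Q: "fsigma_in X Q" and P: "fsigma_in X (topspace X - P)" and PQ: "P \<subseteq> Q"
  shows "\<exists>A. P \<subseteq> A \<and> A \<subseteq> Q \<and> fsigma_in X A \<and> fsigma_in X (topspace X - A)"
proof -
  obtain F where F0: "(\<forall>n. closedin X (F n)) \<and> (\<forall>n. F n \<subseteq> F (Suc n)) \<and> \<Union>(range F) = Q"
    using Q[unfolded fsigma_in_ascending] by (rule exE)
  then have F: "\<And>n. closedin X (F n)" "\<Union>(range F) = Q" by auto
  obtain H where H0: "(\<forall>n. closedin X (H n)) \<and> (\<forall>n. H n \<subseteq> H (Suc n)) \<and> \<Union>(range H) = topspace X - P"
    using P[unfolded fsigma_in_ascending] by (rule exE)
  then have H: "\<And>n. closedin X (H n)" "\<Union>(range H) = topspace X - P" by auto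
  have Qt: "Q \<subseteq> topspace X" using Q by (rule fsigma_in_subset)
  define A where "A = (\<Union>k. F k - \<Union>(H ` {..<k}))"
  define B where "B = (\<Union>k. H k - \<Union>(F ` {..k}))"
  have cH: "closedin X (\<Union>(H ` {..<k}))" for k using H(1) by (intro closedin_Union) auto
  have cF: "closedin X (\<Union>(F ` {..k}))" for k using F(1) by (intro closedin_Union) auto
  have fA: "fsigma_in X A" unfolding A_def
    by (rule fsigma_in_Union) (auto intro: fsigma_closed_diff[OF perf F(1) cH])
  have fB: "fsigma_in X B" unfolding B_def
    by (rule fsigma_in_Union) (auto intro: fsigma_closed_diff[OF perf H(1) cF])
  have AQ: "A \<subseteq> Q" unfolding A_def using F(2) by blast
  have Bt: "B \<subseteq> topspace X" unfolding B_def using H(2) by blast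
  have cover: "x \<in> A \<or> x \<in> B" if x: "x \<in> topspace X" for x
  proof -
    have "x \<in> Q \<or> x \<in> topspace X - P" using x PQ by blast
    then have "\<exists>k. x \<in> F k \<or> x \<in> H k" using F(2) H(2) by blast
    then obtain k where k: "x \<in> F k \<or> x \<in> H k" and kmin: "\<And>j. j < k \<Longrightarrow> \<not> (x \<in> F j \<or> x \<in> H j)"
      using exists_least_iff[of "\<lambda>k. x \<in> F k \<or> x \<in> H k"] by blast
    show ?thesis
    proof (cases "x \<in> F k")
      case True
      then have "x \<in> F k - \<Union>(H ` {..<k})" using kmin by blast
      then show ?thesis unfolding A_def by blast
    next
      case False
      then have "x \<in> H k - \<Union>(F ` {..k})" using kmin k by (auto simp: le_less)
      then show ?thesis unfolding B_def by blast
    qed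
  qed
  have disj: "\<not> (x \<in> A \<and> x \<in> B)" for x
  proof
    assume "x \<in> A \<and> x \<in> B"
    then have "x \<in> A" "x \<in> B" by auto
    from \<open>x \<in> A\<close> obtain k where k0: "x \<in> F k - \<Union>(H ` {..<k})" unfolding A_def by (rule UN_E)
    from \<open>x \<in> B\<close> obtain m where m0: "x \<in> H m - \<Union>(F ` {..m})" unfolding B_def by (rule UN_E)
    have k: "x \<in> F k" "\<And>j. j < k \<Longrightarrow> x \<notin> H j" using k0 by auto
    have m: "x \<in> H m" "\<And>j. j \<le> m \<Longrightarrow> x \<notin> F j" using m0 by auto
    show False
    proof (cases "m < k")
      case True then show False using k(2) m(1) by blast
    next
      case False then show False using k(1) m(2)[of k] by simp
    qed
  qed
  have "topspace X - A = B" using cover disj Bt by blast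
  moreover have "P \<subseteq> A"
  proof
    fix x assume "x \<in> P"
    then have "x \<in> topspace X" "x \<notin> B" using PQ Qt H(2) unfolding B_def by auto
    then show "x \<in> A" using cover by blast
  qed
  ultimately show ?thesis using fA fB AQ by auto
qed

lemma chi_Baire:
  assumes N: "normal_space X" and A: "fsigma_in X A" and A': "fsigma_in X (topspace X - A)"
  shows "first_Baire_class X (\<lambda>x. if x \<in> A then 1 else 0)"
proof -
  obtain F where F: "\<And>n. closedin X (F n)" "\<And>n. F n \<subseteq> F (Suc n)" "\<Union>(range F) = A"
    using A unfolding fsigma_in_ascending by metis
  obtain H where H: "\<And>n. closedin X (H n)" "\<And>n. H n \<subseteq> H (Suc n)" "\<Union>(range H) = topspace X - A"
    using A' unfolding fsigma_in_ascending by metis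
  have "\<forall>n. \<exists>g. continuous_map X euclideanreal g \<and> g ` H n \<subseteq> {0} \<and> g ` F n \<subseteq> {1}"
  proof
    fix n
    have "disjnt (H n) (F n)" using F(3) H(3) unfolding disjnt_def by blast
    then show "\<exists>g. continuous_map X euclideanreal g \<and> g ` H n \<subseteq> {0} \<and> g ` F n \<subseteq> {1}"
      using Urysohn_lemma_alt[OF N H(1) F(1), of n n 0 1] by metis
  qed
  then obtain g where g: "\<And>n. continuous_map X euclideanreal (g n)"
    "\<And>n. g n ` H n \<subseteq> {0}" "\<And>n. g n ` F n \<subseteq> {1}" by metis
  have "(\<lambda>n. g n x) \<longlonglongrightarrow> (if x \<in> A then 1 else 0)" if x: "x \<in> topspace X" for x
  proof (cases "x \<in> A")
    case True
    then obtain k where k: "x \<in> F k" using F(3) by blast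
    have "\<forall>n\<ge>k. g n x = 1"
    proof (intro allI impI)
      fix n assume "k \<le> n"
      then have "F k \<subseteq> F n" using lift_Suc_mono_le[of F, OF F(2)] by blast
      then show "g n x = 1" using g(3)[of n] k by blast
    qed
    then have "eventually (\<lambda>n. g n x = 1) sequentially" unfolding eventually_sequentially by blast
    then show ?thesis using True by (simp add: tendsto_eventually)
  next
    case False
    then obtain k where k: "x \<in> H k" using H(3) x by blast
    have "\<forall>n\<ge>k. g n x = 0"
    proof (intro allI impI)
      fix n assume "k \<le> n"
      then have "H k \<subseteq> H n" using lift_Suc_mono_le[of H, OF H(2)] by blast
      then show "g n x = 0" using g(2)[of n] k by blast
    qed
    then have "eventually (\<lambda>n. g n x = 0) sequentially" unfolding eventually_sequentially by blast
    then show ?thesis using False by (simp add: tendsto_eventually)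
  qed
  then show ?thesis unfolding first_Baire_class_def using g(1) by blast
qed

lemma Baire_comp:
  assumes u: "first_Baire_class X u" and c: "continuous_on UNIV \<phi>"
  shows "first_Baire_class X (\<lambda>x. \<phi> (u x))"
proof -
  obtain g where g: "\<And>n. continuous_map X euclideanreal (g n)"
    "\<And>x. x \<in> topspace X \<Longrightarrow> (\<lambda>n. g n x) \<longlonglongrightarrow> u x"
    using u unfolding first_Baire_class_def by blast
  have cm: "continuous_map euclideanreal euclideanreal \<phi>" using c by simp
  have "continuous_map X euclideanreal (\<lambda>x. \<phi> (g n x))" for n
    using continuous_map_compose[OF g(1) cm] by (simp add: o_def)
  moreover have "(\<lambda>n. \<phi> (g n x)) \<longlonglongrightarrow> \<phi> (u x)" if "x \<in> topspace X" for x
  proof (rule isCont_tendsto_compose[OF _ g(2)[OF that]])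
    show "isCont \<phi> (u x)" using c continuous_on_eq_continuous_at[of UNIV \<phi>] by simp
  qed
  ultimately show ?thesis unfolding first_Baire_class_def
    by (intro exI[of _ "\<lambda>n x. \<phi> (g n x)"]) blast
qed

lemma Baire_const: "first_Baire_class X (\<lambda>x. c)"
  unfolding first_Baire_class_def by (rule exI[of _ "\<lambda>n x. c"]) simp

lemma Baire_diff:
  assumes u: "first_Baire_class X u" and v: "first_Baire_class X v"
  shows "first_Baire_class X (\<lambda>x. u x - v x)"
proof -
  obtain g where g: "\<And>n. continuous_map X euclideanreal (g n)"
    "\<And>x. x \<in> topspace X \<Longrightarrow> (\<lambda>n. g n x) \<longlonglongrightarrow> u x"
    using u unfolding first_Baire_class_def by blast
  obtain g' where g': "\<And>n. continuous_map X euclideanreal (g' n)"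
    "\<And>x. x \<in> topspace X \<Longrightarrow> (\<lambda>n. g' n x) \<longlonglongrightarrow> v x"
    using v unfolding first_Baire_class_def by blast
  have "continuous_map X euclideanreal (\<lambda>x. g n x - g' n x)" for n
    using g(1) g'(1) by (rule continuous_map_diff)
  moreover have "(\<lambda>n. g n x - g' n x) \<longlonglongrightarrow> u x - v x" if "x \<in> topspace X" for x
    using g(2)[OF that] g'(2)[OF that] by (rule tendsto_diff)
  ultimately show ?thesis unfolding first_Baire_class_def
    by (intro exI[of _ "\<lambda>n x. g n x - g' n x"]) blast
qed

lemma Baire_max:
  assumes u: "first_Baire_class X u" and v: "first_Baire_class X v"
  shows "first_Baire_class X (\<lambda>x. max (u x) (v x))"
proof -
  obtain g where g: "\<And>n. continuous_map X euclideanreal (g n)"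
    "\<And>x. x \<in> topspace X \<Longrightarrow> (\<lambda>n. g n x) \<longlonglongrightarrow> u x"
    using u unfolding first_Baire_class_def by blast
  obtain g' where g': "\<And>n. continuous_map X euclideanreal (g' n)"
    "\<And>x. x \<in> topspace X \<Longrightarrow> (\<lambda>n. g' n x) \<longlonglongrightarrow> v x"
    using v unfolding first_Baire_class_def by blast
  have "continuous_map X euclideanreal (\<lambda>x. max (g n x) (g' n x))" for n
    using g(1) g'(1) by (rule continuous_map_real_max)
  moreover have "(\<lambda>n. max (g n x) (g' n x)) \<longlonglongrightarrow> max (u x) (v x)" if "x \<in> topspace X" for x
    using g(2)[OF that] g'(2)[OF that] by (rule tendsto_max)
  ultimately show ?thesis unfolding first_Baire_class_def
    by (intro exI[of _ "\<lambda>n x. max (g n x) (g' n x)"]) blast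
qed

lemma Baire_uniform:
  assumes hb: "\<And>x. x \<in> topspace X \<Longrightarrow> \<bar>h x\<bar> \<le> 1"
    and s: "\<And>m. first_Baire_class X (s m)"
    and ap: "\<And>m x. x \<in> topspace X \<Longrightarrow> \<bar>s m x - h x\<bar> \<le> (1/2)^m"
  shows "first_Baire_class X h"
proof -
  define u where "u k = (if k = 0 then s 0 else (\<lambda>x. s k x - s (k - 1) x))" for k
  define M where "M k = 4 * (1/2::real)^k" for k
  have Mpos: "M k \<ge> 0" for k unfolding M_def by simp
  have uB: "first_Baire_class X (u k)" for k
    unfolding u_def by (auto intro: Baire_diff s)
  have ub: "\<bar>u k x\<bar> \<le> M k" if x: "x \<in> topspace X" for k x
  proof (cases k)
    case 0
    have "\<bar>s 0 x - h x\<bar> \<le> 1" using ap[OF x, of 0] by simp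
    then have "\<bar>s 0 x\<bar> \<le> 2" using hb[OF x] by linarith
    then show ?thesis using 0 unfolding u_def M_def by simp
  next
    case (Suc j)
    have a1: "\<bar>s k x - h x\<bar> \<le> (1/2)^k" and a2: "\<bar>s j x - h x\<bar> \<le> (1/2)^j" using ap[OF x] by auto
    have "(1/2::real)^j = 2 * (1/2)^k" using Suc by simp
    then have "\<bar>s k x - s j x\<bar> \<le> 3 * (1/2)^k" using a1 a2 by linarith
    moreover have "(0::real) \<le> (1/2)^j" by simp
    moreover have "M k = 2 * (1/2)^j" unfolding M_def using Suc by simp
    moreover have "u k x = s k x - s j x" unfolding u_def using Suc by simp
    ultimately show ?thesis using \<open>(1/2::real)^j = 2 * (1/2)^k\<close> by linarith
  qed
  have "\<forall>k. \<exists>g. (\<forall>n. continuous_map X euclideanreal (g n)) \<and>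
             (\<forall>x\<in>topspace X. (\<lambda>n. g n x) \<longlonglongrightarrow> u k x)"
    using uB unfolding first_Baire_class_def by blast
  then obtain v where v: "\<And>k n. continuous_map X euclideanreal (v k n)"
    "\<And>k x. x \<in> topspace X \<Longrightarrow> (\<lambda>n. v k n x) \<longlonglongrightarrow> u k x" by metis
  define cl where "cl k y = max (- M k) (min (M k) y)" for k y
  define G where "G n x = (\<Sum>k<n. cl k (v k n x))" for n x
  have cG: "continuous_map X euclideanreal (G n)" for n
  proof -
    have "continuous_map X euclideanreal (\<lambda>x. cl k (v k n x))" for k
      unfolding cl_def
      by (intro continuous_map_real_max continuous_map_real_min continuous_map_const[THEN iffD2] v(1)) simp_all
    then show ?thesis unfolding G_def by (intro continuous_map_sum) auto
  qed
  have lim: "(\<lambda>n. G n x) \<longlonglongrightarrow> h x" if x: "x \<in> topspace X" for x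
  proof -
    define a where "a k n = (if k < n then cl k (v k n x) else 0)" for k n
    have cl_id: "cl k (u k x) = u k x" for k using ub[OF x, of k] unfolding cl_def by auto
    have cl_b: "\<bar>cl k y\<bar> \<le> M k" for k y using Mpos[of k] unfolding cl_def by auto
    have lima: "(\<lambda>n. a k n) \<longlonglongrightarrow> u k x" for k
    proof -
      have "isCont (cl k) (u k x)" unfolding cl_def by (intro continuous_intros)
      then have "(\<lambda>n. cl k (v k n x)) \<longlonglongrightarrow> cl k (u k x)"
        using v(2)[OF x] by (rule isCont_tendsto_compose)
      then have t: "(\<lambda>n. cl k (v k n x)) \<longlonglongrightarrow> u k x" using cl_id by simp
      have "eventually (\<lambda>n. cl k (v k n x) = a k n) sequentially"
        unfolding eventually_sequentially a_def by (intro exI[of _ "Suc k"]) auto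
      then show ?thesis using t by (rule Lim_transform_eventually[rotated])
    qed
    have bnd: "eventually (\<lambda>(k, n). norm (a k n) \<le> M k) (at_top \<times>\<^sub>F sequentially)"
      by (rule always_eventually) (auto simp: a_def cl_b Mpos)
    have sM: "summable M" unfolding M_def by (intro summable_mult summable_geometric) simp
    have T: "(\<lambda>n. suminf (\<lambda>k. a k n)) \<longlonglongrightarrow> suminf (\<lambda>k. u k x)"
      using tannerys_theorem[OF lima bnd sM sequentially_bot] by blast
    have eqG: "suminf (\<lambda>k. a k n) = G n x" for n
    proof -
      have "suminf (\<lambda>k. a k n) = (\<Sum>k<n. a k n)" by (rule suminf_finite) (auto simp: a_def)
      also have "\<dots> = G n x" unfolding G_def a_def by simp
      finally show ?thesis .
    qed
    have tele: "(\<Sum>k<Suc n. u k x) = s n x" for n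
      by (induction n) (auto simp: u_def)
    have "(\<lambda>n. s n x - h x) \<longlonglongrightarrow> 0"
    proof (rule Lim_null_comparison)
      show "eventually (\<lambda>n. norm (s n x - h x) \<le> (1/2)^n) sequentially"
        using ap[OF x] by (intro always_eventually) simp
      show "(\<lambda>n. (1/2::real)^n) \<longlonglongrightarrow> 0" by (rule LIMSEQ_power_zero) simp
    qed
    then have "(\<lambda>n. s n x) \<longlonglongrightarrow> h x" by (rule LIM_zero_cancel)
    then have "(\<lambda>n. \<Sum>k<Suc n. u k x) \<longlonglongrightarrow> h x" using tele by simp
    then have "(\<lambda>n. \<Sum>k<n. u k x) \<longlonglongrightarrow> h x" by (rule LIMSEQ_imp_Suc)
    then have "(\<lambda>k. u k x) sums h x" unfolding sums_def .
    then have "suminf (\<lambda>k. u k x) = h x" by (rule sums_unique[symmetric])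
    then show ?thesis using T eqG by simp
  qed
  show ?thesis unfolding first_Baire_class_def using cG lim by blast
qed

primrec smax :: "(nat \<Rightarrow> 'a \<Rightarrow> real) \<Rightarrow> nat \<Rightarrow> 'a \<Rightarrow> real" where
  "smax c 0 = (\<lambda>x. -1)"
| "smax c (Suc n) = (\<lambda>x. max (smax c n x) (c (Suc n) x))"

lemma smax_Baire: "(\<And>j. first_Baire_class X (c j)) \<Longrightarrow> first_Baire_class X (smax c n)"
proof (induction n)
  case 0 then show ?case using Baire_const by simp
next
  case (Suc n) then show ?case by (simp add: Baire_max)
qed

lemma smax_le: "(\<And>j. c j x \<le> b) \<Longrightarrow> -1 \<le> b \<Longrightarrow> smax c n x \<le> b"
  by (induction n) auto

lemma smax_ge_m1: "-1 \<le> smax c n x"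
  by (induction n) auto

lemma smax_ge: "1 \<le> j \<Longrightarrow> j \<le> n \<Longrightarrow> c j x \<le> smax c n x"
proof (induction n)
  case 0 then show ?case by simp
next
  case (Suc n)
  show ?case
  proof (cases "j = Suc n")
    case True then show ?thesis by simp
  next
    case False then have "j \<le> n" using Suc.prems by simp
    then show ?thesis using Suc by simp
  qed
qed

lemma step_approx:
  assumes N: "normal_space X" and perf: "\<And>G. openin X G \<Longrightarrow> fsigma_in X G"
    and fs1: "\<And>t. fsigma_in X {x \<in> topspace X. h x > t}"
    and fs2: "\<And>t. fsigma_in X {x \<in> topspace X. h x < t}"
    and hb: "\<And>x. x \<in> topspace X \<Longrightarrow> \<bar>h x\<bar> < 1"
    and M: "M > (0::nat)"
  shows "\<exists>s. first_Baire_class X s \<and> (\<forall>x\<in>topspace X. \<bar>s x - h x\<bar> \<le> 2 / real M)"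
proof -
  define e where "e = 1 / real M"
  define t where "t j = -1 + real j / real M" for j
  have "\<forall>j. \<exists>A. {x \<in> topspace X. h x \<ge> t j} \<subseteq> A \<and> A \<subseteq> {x \<in> topspace X. h x > t j - e}
          \<and> fsigma_in X A \<and> fsigma_in X (topspace X - A)"
  proof
    fix j
    have "topspace X - {x \<in> topspace X. h x \<ge> t j} = {x \<in> topspace X. h x < t j}" by auto
    then have "fsigma_in X (topspace X - {x \<in> topspace X. h x \<ge> t j})" using fs2 by simp
    moreover have "{x \<in> topspace X. h x \<ge> t j} \<subseteq> {x \<in> topspace X. h x > t j - e}"
    proof
      fix x assume "x \<in> {x \<in> topspace X. h x \<ge> t j}"
      then have "x \<in> topspace X" "h x \<ge> t j" by auto
      moreover have "0 < e" unfolding e_def using M by simp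
      ultimately have "x \<in> topspace X" "h x > t j - e" by linarith+
      then show "x \<in> {x \<in> topspace X. h x > t j - e}" by simp
    qed
    ultimately show "\<exists>A. {x \<in> topspace X. h x \<ge> t j} \<subseteq> A \<and> A \<subseteq> {x \<in> topspace X. h x > t j - e}
          \<and> fsigma_in X A \<and> fsigma_in X (topspace X - A)"
      using separation_ambiguous[OF perf fs1] by blast
  qed
  then have "\<exists>A. \<forall>j. {x \<in> topspace X. h x \<ge> t j} \<subseteq> A j \<and> A j \<subseteq> {x \<in> topspace X. h x > t j - e}
          \<and> fsigma_in X (A j) \<and> fsigma_in X (topspace X - A j)" by (rule choice)
  then obtain A where A0: "\<forall>j. {x \<in> topspace X. h x \<ge> t j} \<subseteq> A j \<and> A j \<subseteq> {x \<in> topspace X. h x > t j - e}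
          \<and> fsigma_in X (A j) \<and> fsigma_in X (topspace X - A j)" by (elim exE)
  have A: "\<And>j. {x \<in> topspace X. h x \<ge> t j} \<subseteq> A j"
    "\<And>j. A j \<subseteq> {x \<in> topspace X. h x > t j - e}"
    "\<And>j. fsigma_in X (A j)" "\<And>j. fsigma_in X (topspace X - A j)" using A0 by simp_all
  define c where "c j x = (t j - e + 1) * (if x \<in> A j then 1 else 0) + (-1)" for j x
  have cB: "first_Baire_class X (c j)" for j
  proof -
    have "first_Baire_class X (\<lambda>x. (\<lambda>y. (t j - e + 1) * y + (-1)) (if x \<in> A j then 1 else 0))"
      by (rule Baire_comp[OF chi_Baire[OF N A(3) A(4)]]) (intro continuous_intros)
    then show ?thesis unfolding c_def by simp
  qed
  have cval: "c j x = (if x \<in> A j then t j - e else -1)" for j x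
    unfolding c_def by simp
  define s where "s = smax c (2 * M)"
  have sB: "first_Baire_class X s" unfolding s_def using cB by (rule smax_Baire)
  have "\<bar>s x - h x\<bar> \<le> 2 / real M" if x: "x \<in> topspace X" for x
  proof -
    have hx: "-1 < h x" "h x < 1" using hb[OF x] by auto
    have "c j x \<le> h x" for j
    proof (cases "x \<in> A j")
      case True
      then have "h x > t j - e" using A(2)[of j] by blast
      then show ?thesis using True cval by simp
    next
      case False then show ?thesis using cval hx by simp
    qed
    then have up: "s x \<le> h x" unfolding s_def using hx by (intro smax_le) auto
    have low: "h x - 2 * e \<le> s x"
    proof (cases "h x < -1 + 2 * e")
      case True then show ?thesis using smax_ge_m1[of c "2*M" x] unfolding s_def by linarith
    next
      case False
      define r where "r = (h x + 1) * real M"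
      have Mp: "real M > 0" using M by simp
      have r2: "r \<ge> 2" using False Mp unfolding r_def e_def by (simp add: field_simps)
      have r2M: "r < 2 * real M" using hx Mp unfolding r_def by (simp add: field_simps)
      define j where "j = nat \<lfloor>r\<rfloor>"
      have fl: "of_int \<lfloor>r\<rfloor> \<le> r" "r < of_int \<lfloor>r\<rfloor> + 1" by linarith+
      have "\<lfloor>r\<rfloor> \<ge> 0" using r2 by simp
      then have jr: "real j = of_int \<lfloor>r\<rfloor>" unfolding j_def by simp
      have j1: "1 \<le> j" using fl jr r2 by linarith
      have j2: "j \<le> 2 * M"
      proof -
        have "real j < 2 * real M" using fl jr r2M by linarith
        then show ?thesis by linarith
      qed
      have "real j / real M \<le> h x + 1"
        using fl jr Mp unfolding r_def by (simp add: divide_le_eq)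
      then have "t j \<le> h x" unfolding t_def by simp
      then have "x \<in> A j" using A(1)[of j] x by blast
      then have cj: "c j x = t j - e" using cval by simp
      have "r < real j + 1" using fl jr by linarith
      then have "h x + 1 < (real j + 1) / real M" using Mp unfolding r_def by (simp add: field_simps)
      then have "h x < t j + e" unfolding t_def e_def by (simp add: add_divide_distrib)
      moreover have "c j x \<le> s x" unfolding s_def using j1 j2 by (rule smax_ge)
      ultimately show ?thesis using cj by linarith
    qed
    have "2 * e = 2 / real M" unfolding e_def by simp
    then show ?thesis using up low by linarith
  qed
  then show ?thesis using sB by blast
qed

lemma contpt_comp:
  assumes c: "contpt X f x" and i: "isCont \<phi> (f x)"
  shows "contpt X (\<lambda>y. \<phi> (f y)) x"
  unfolding contpt_def
proof (intro allI impI)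
  fix e :: real assume e: "e > 0"
  have "\<exists>s>0. \<forall>z. z \<noteq> f x \<and> norm (z - f x) < s \<longrightarrow> norm (\<phi> z - \<phi> (f x)) < e"
    using i e unfolding isCont_def LIM_eq by blast
  then obtain s where s: "s > 0" "\<And>z. z \<noteq> f x \<Longrightarrow> \<bar>z - f x\<bar> < s \<Longrightarrow> \<bar>\<phi> z - \<phi> (f x)\<bar> < e"
    by auto
  obtain U where U: "openin X U" "x \<in> U" "\<forall>y\<in>U. \<bar>f y - f x\<bar> < s"
    using c[unfolded contpt_def, rule_format, OF s(1)] by (elim exE conjE)
  have "\<forall>y\<in>U. \<bar>\<phi> (f y) - \<phi> (f x)\<bar> < e"
  proof
    fix y assume y: "y \<in> U"
    show "\<bar>\<phi> (f y) - \<phi> (f x)\<bar> < e"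
    proof (cases "f y = f x")
      case True then show ?thesis using e by simp
    next
      case False then show ?thesis using s(2) bspec[OF U(3) y] by blast
    qed
  qed
  then show "\<exists>U. openin X U \<and> x \<in> U \<and> (\<forall>y\<in>U. \<bar>\<phi> (f y) - \<phi> (f x)\<bar> < e)"
    using U(1,2) by blast
qed

lemma phi_inv:
  fixes y :: real
  shows "(y / (1 + \<bar>y\<bar>)) / (1 - \<bar>y / (1 + \<bar>y\<bar>)\<bar>) = y"
proof -
  have p: "1 + \<bar>y\<bar> > 0" by simp
  have "\<bar>y / (1 + \<bar>y\<bar>)\<bar> = \<bar>y\<bar> / (1 + \<bar>y\<bar>)" using p by (simp add: abs_divide)
  then have "1 - \<bar>y / (1 + \<bar>y\<bar>)\<bar> = 1 / (1 + \<bar>y\<bar>)" using p by (simp add: field_simps)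
  then show ?thesis using p by simp
qed

lemma phi_bound:
  fixes y :: real
  shows "\<bar>y / (1 + \<bar>y\<bar>)\<bar> < 1"
proof -
  have p: "1 + \<bar>y\<bar> > 0" by simp
  have "\<bar>y / (1 + \<bar>y\<bar>)\<bar> = \<bar>y\<bar> / (1 + \<bar>y\<bar>)" using p by (simp add: abs_divide)
  also have "\<dots> < 1" using p by (simp add: divide_less_eq)
  finally show ?thesis .
qed

theorem proposition3p4:
  fixes X :: "'a topology" and f :: "'a \<Rightarrow> real"
  assumes "regular_space X" and "Lusin_space X"
    and "quasicontinuous_on X f"
  shows "first_Baire_class X f"
proof -
  have H: "Hausdorff_space X" using assms(2) by (simp add: Lusin_space_def)
  have N: "normal_space X" using assms(1,2) by (rule lusin_normal)
  have perf: "\<And>G. openin X G \<Longrightarrow> fsigma_in X G" using assms(1,2) by (rule lusin_open_fsigma)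
  define D where "D = {x \<in> topspace X. \<not> contpt X f x}"
  have cD: "countable D" unfolding D_def using assms(2,3) by (rule quasi_disc_countable)
  define h where "h x = f x / (1 + \<bar>f x\<bar>)" for x
  have icphi: "isCont (\<lambda>y::real. y / (1 + \<bar>y\<bar>)) a" for a
  proof -
    have "1 + \<bar>a\<bar> \<noteq> 0" by (metis abs_ge_zero add_pos_nonneg less_numeral_extra(1) order_less_irrefl)
    then show ?thesis by (intro continuous_intros) auto
  qed
  have nc: "contpt X h x" if "x \<in> topspace X" "x \<notin> D" for x
  proof -
    have "contpt X f x" using that unfolding D_def by blast
    then show ?thesis unfolding h_def using icphi by (rule contpt_comp)
  qed
  have fs1: "fsigma_in X {x \<in> topspace X. h x > t}" for t
    using fsigma_preimage[OF H perf cD nc, of "{t<..}"] by simp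
  have fs2: "fsigma_in X {x \<in> topspace X. h x < t}" for t
    using fsigma_preimage[OF H perf cD nc, of "{..<t}"] by simp
  have hb: "\<bar>h x\<bar> < 1" for x unfolding h_def by (rule phi_bound)
  have "\<forall>m. \<exists>s. first_Baire_class X s \<and> (\<forall>x\<in>topspace X. \<bar>s x - h x\<bar> \<le> (1/2)^m)"
  proof
    fix m :: nat
    have e: "2 / real ((2::nat)^(Suc m)) = (1/2::real)^m" by (simp add: power_one_over)
    have "(0::nat) < 2^(Suc m)" by simp
    from step_approx[OF N perf fs1 fs2 hb this] e
    show "\<exists>s. first_Baire_class X s \<and> (\<forall>x\<in>topspace X. \<bar>s x - h x\<bar> \<le> (1/2)^m)" by simp
  qed
  then have "\<exists>S. \<forall>m. first_Baire_class X (S m) \<and> (\<forall>x\<in>topspace X. \<bar>S m x - h x\<bar> \<le> (1/2)^m)"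
    by (rule choice)
  then obtain S where S: "\<forall>m. first_Baire_class X (S m) \<and> (\<forall>x\<in>topspace X. \<bar>S m x - h x\<bar> \<le> (1/2)^m)"
    by (elim exE)
  have hB: "first_Baire_class X h"
  proof (rule Baire_uniform[of X h S])
    show "\<And>x. \<bar>h x\<bar> \<le> 1" using hb less_imp_le by blast
    show "\<And>m. first_Baire_class X (S m)" using S by blast
    show "\<And>m x. x \<in> topspace X \<Longrightarrow> \<bar>S m x - h x\<bar> \<le> (1/2)^m" using S by blast
  qed
  then obtain g where g: "\<And>n. continuous_map X euclideanreal (g n)"
    "\<And>x. x \<in> topspace X \<Longrightarrow> (\<lambda>n. g n x) \<longlonglongrightarrow> h x"
    unfolding first_Baire_class_def by blast
  define a where "a n = 1 - inverse (real (Suc (Suc n)))" for n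
  have a1: "a n < 1" for n unfolding a_def by simp
  have a0: "0 < a n" for n
  proof -
    have "inverse (real (Suc (Suc n))) < 1" by (simp add: inverse_less_1_iff)
    then show ?thesis unfolding a_def by simp
  qed
  have alim: "a \<longlonglongrightarrow> 1"
  proof -
    have "(\<lambda>n. inverse (real (Suc (Suc n)))) \<longlonglongrightarrow> 0"
      using LIMSEQ_Suc[OF LIMSEQ_inverse_real_of_nat] by simp
    then have "(\<lambda>n. 1 - inverse (real (Suc (Suc n)))) \<longlonglongrightarrow> 1 - 0"
      by (intro tendsto_diff tendsto_const)
    then show ?thesis unfolding a_def by simp
  qed
  define cl where "cl n y = max (- a n) (min (a n) y)" for n y
  have clb: "\<bar>cl n y\<bar> \<le> a n" for n y unfolding cl_def using a0[of n] by auto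
  define G where "G n x = cl n (g n x) / (1 - \<bar>cl n (g n x)\<bar>)" for n x
  have cG: "continuous_map X euclideanreal (G n)" for n
  proof -
    have c1: "continuous_map X euclideanreal (\<lambda>x. cl n (g n x))"
      unfolding cl_def
      by (intro continuous_map_real_max continuous_map_real_min continuous_map_const[THEN iffD2] g(1)) simp_all
    have c2: "continuous_map X euclideanreal (\<lambda>x. 1 - \<bar>cl n (g n x)\<bar>)"
      by (intro continuous_map_diff continuous_map_real_abs c1) simp
    have nz: "1 - \<bar>cl n (g n x)\<bar> \<noteq> 0" for x using clb[of n "g n x"] a1[of n] by linarith
    show ?thesis unfolding G_def using c1 c2 nz by (rule continuous_map_real_divide)
  qed
  have lim: "(\<lambda>n. G n x) \<longlonglongrightarrow> f x" if x: "x \<in> topspace X" for x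
  proof -
    have "(\<lambda>n. cl n (g n x)) \<longlonglongrightarrow> max (- 1) (min 1 (h x))"
      unfolding cl_def by (intro tendsto_max tendsto_min tendsto_minus alim g(2)[OF x])
    moreover have "max (- 1) (min 1 (h x)) = h x" using hb[of x] by auto
    ultimately have t: "(\<lambda>n. cl n (g n x)) \<longlonglongrightarrow> h x" by simp
    have "1 - \<bar>h x\<bar> \<noteq> 0" using hb[of x] by simp
    then have "isCont (\<lambda>c. c / (1 - \<bar>c\<bar>)) (h x)" by (intro continuous_intros) auto
    then have "(\<lambda>n. cl n (g n x) / (1 - \<bar>cl n (g n x)\<bar>)) \<longlonglongrightarrow> h x / (1 - \<bar>h x\<bar>)"
      using t by (rule isCont_tendsto_compose)
    moreover have "h x / (1 - \<bar>h x\<bar>) = f x" unfolding h_def by (rule phi_inv)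
    ultimately show ?thesis unfolding G_def by simp
  qed
  show ?thesis unfolding first_Baire_class_def using cG lim by blast
qed

end
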